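(* Let $R>0$, $D>0$ and $k\ge0$ an integer. There exists an algorithm $\mathcal A\in\mathfrak A_{\mathrm{lin}}$ such that for every $m\ge1$, every $\mathbf B\in\mathbb R^{m\times m}$ with $\|\mathbf B\|\le R$, and every $\mathbf v=\mathbf B\mathbf z^\star$ with $\|\mathbf z^\star\|\le D$, the iterate $\mathbf z^k$ produced by $\mathcal A$ satisfies $$\|\mathbf B\mathbf z^k-\mathbf v\|^2\le\frac{R^2D^2}{(2\lfloor k/2\rfloor+1)^2}.$$
   Context: $\mathfrak A_{\mathrm{lin}}$ is the class of iterative algorithms for a linear equation $\mathbf B\mathbf z=\mathbf v$ that access $\mathbf B$ only through products with $\mathbf B$ and $\mathbf B^\intercal$, in the sense that $\mathbf z^k\in\mathrm{span}\{\mathbf v^0,\dots,\mathbf v^k\}$, where $\mathbf v^0=0$, $\mathbf v^1=\mathbf v$, and for each $j\ge2$, $\mathbf v^j=\mathbf B\mathbf v^i$ or $\mathbf v^j=\mathbf B^\intercal\mathbf v^i$ for some $i\in\{0,\dots,j-1\}$. $\|\mathbf B\|$ is the spectral norm. *)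

theory Defs
  imports Complex_Main "Jordan_Normal_Form.Matrix"
begin

definition vnorm :: "real vec \<Rightarrow> real" where
  "vnorm v = sqrt (v \<bullet> v)"

definition spec_norm :: "real mat \<Rightarrow> real" where
  "spec_norm B = Sup {vnorm (B *\<^sub>v x) | x. x \<in> carrier_vec (dim_col B) \<and> vnorm x \<le> 1}"

text \<open>An algorithm maps the input (B, v) to its sequence of iterates z^0, z^1, ...\<close>
definition in_A_lin :: "(real mat \<Rightarrow> real vec \<Rightarrow> nat \<Rightarrow> real vec) \<Rightarrow> bool" where
  "in_A_lin A \<longleftrightarrow>
    (\<forall>m B v. B \<in> carrier_mat m m \<longrightarrow> v \<in> carrier_vec m \<longrightarrow>
      (\<exists>vs :: nat \<Rightarrow> real vec.
          vs 0 = 0\<^sub>v m \<and> vs 1 = v \<and>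
          (\<forall>j\<ge>2. \<exists>i<j. vs j = B *\<^sub>v vs i \<or> vs j = B\<^sup>T *\<^sub>v vs i) \<and>
          (\<forall>k. \<exists>c :: nat \<Rightarrow> real.
                 A B v k = vec m (\<lambda>r. \<Sum>i\<le>k. c i * vs i $ r))))"

end

theory Submission
  imports Defs
begin


definition Mop :: "real mat \<Rightarrow> real \<Rightarrow> nat \<Rightarrow> real vec \<Rightarrow> real vec" where
  "Mop B R n x = (1/R) \<cdot>\<^sub>v ((if odd n then B else transpose_mat B) *\<^sub>v x)"

fun wseq :: "real mat \<Rightarrow> real \<Rightarrow> real vec \<Rightarrow> nat \<Rightarrow> real vec" where
  "wseq B R z 0 = 0\<^sub>v (dim_vec z)"
| "wseq B R z (Suc 0) = z"
| "wseq B R z (Suc (Suc n)) = 2 \<cdot>\<^sub>v Mop B R (Suc n) (wseq B R z (Suc n)) - wseq B R z n"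

lemma self_sp_nonneg: "(x::real vec) \<bullet> x \<ge> 0"
  unfolding scalar_prod_def by (auto intro: sum_nonneg)

lemma sq_expand:
  assumes "x \<in> carrier_vec m" "y \<in> carrier_vec m"
  shows "(a \<cdot>\<^sub>v x - y) \<bullet> (a \<cdot>\<^sub>v x - y) = a^2 * (x \<bullet> x) - 2 * a * (x \<bullet> y) + (y::real vec) \<bullet> y"
  using assms unfolding scalar_prod_def
  by (simp add: sum.distrib sum_subtractf sum_distrib_left algebra_simps power2_eq_square)

lemma lin_expand:
  assumes "x \<in> carrier_vec m" "y \<in> carrier_vec m" "u \<in> carrier_vec m"
  shows "(a \<cdot>\<^sub>v x - y) \<bullet> u = a * (x \<bullet> u) - (y::real vec) \<bullet> u"
  using assms unfolding scalar_prod_def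
  by (simp add: sum.distrib sum_subtractf sum_distrib_left algebra_simps)

lemma cs_weak:
  assumes "x \<in> carrier_vec m" "u \<in> carrier_vec m" "R > 0"
  shows "2 * ((x::real vec) \<bullet> u) \<le> R^2 * (x \<bullet> x) + (u \<bullet> u) / R^2"
proof -
  have "0 \<le> (R \<cdot>\<^sub>v x - (1/R) \<cdot>\<^sub>v u) \<bullet> (R \<cdot>\<^sub>v x - (1/R) \<cdot>\<^sub>v u)" by (rule self_sp_nonneg)
  also have "\<dots> = R^2 * (x \<bullet> x) - 2 * (x \<bullet> u) + (u \<bullet> u) / R^2"
    using assms by (simp add: sq_expand[of _ m] power2_eq_square field_simps)
  finally show ?thesis by simp
qed

fun Eseq :: "real mat \<Rightarrow> real \<Rightarrow> real vec \<Rightarrow> nat \<Rightarrow> real vec" where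
  "Eseq B R v 0 = 0\<^sub>v (dim_vec v)"
| "Eseq B R v (Suc 0) = (2/R) \<cdot>\<^sub>v v"
| "Eseq B R v (Suc (Suc t)) = (4/R^2) \<cdot>\<^sub>v (B *\<^sub>v (transpose_mat B *\<^sub>v Eseq B R v (Suc t)))
      - 2 \<cdot>\<^sub>v Eseq B R v (Suc t) - Eseq B R v t"

fun gseq :: "real mat \<Rightarrow> real \<Rightarrow> real vec \<Rightarrow> nat \<Rightarrow> real vec" where
  "gseq B R v 0 = 0\<^sub>v (dim_vec v)"
| "gseq B R v (Suc 0) = 0\<^sub>v (dim_vec v)"
| "gseq B R v (Suc (Suc t)) = (4/R^2) \<cdot>\<^sub>v (transpose_mat B *\<^sub>v Eseq B R v (Suc t))
      - 2 \<cdot>\<^sub>v gseq B R v (Suc t) - gseq B R v t"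

fun escal :: "nat \<Rightarrow> real" where
  "escal 0 = 0"
| "escal (Suc 0) = 1"
| "escal (Suc (Suc t)) = -2 * escal (Suc t) - escal t"

lemma escal_closed: "escal t = (-1)^(t+1) * real t \<and> escal (Suc t) = (-1)^(t+2) * real (Suc t)"
  by (induction t) (auto simp: algebra_simps)

lemma escal_diff: "escal (Suc t) - escal t = (-1)^t * (2 * real t + 1)"
  using escal_closed[of t] by (simp add: algebra_simps)

locale kset =
  fixes m :: nat and B :: "real mat" and R :: real
  assumes B: "B \<in> carrier_mat m m" and R: "R > 0"
    and normB: "\<And>x. x \<in> carrier_vec m \<Longrightarrow> (B *\<^sub>v x) \<bullet> (B *\<^sub>v x) \<le> R^2 * (x \<bullet> x)"
begin

lemma BT: "transpose_mat B \<in> carrier_mat m m" using B by simp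

lemma normBT:
  assumes x: "x \<in> carrier_vec m"
  shows "(transpose_mat B *\<^sub>v x) \<bullet> (transpose_mat B *\<^sub>v x) \<le> R^2 * (x \<bullet> x)"
proof -
  define y where "y = transpose_mat B *\<^sub>v x"
  have y: "y \<in> carrier_vec m" using B x unfolding y_def by simp
  have "y \<bullet> y = x \<bullet> (B *\<^sub>v y)"
    unfolding y_def by (rule transpose_vec_mult_scalar[OF B], insert B x, auto)
  also have "2 * \<dots> \<le> R^2 * (x \<bullet> x) + ((B *\<^sub>v y) \<bullet> (B *\<^sub>v y)) / R^2"
    by (rule cs_weak[of _ m], insert B x y R, auto)
  also have "\<dots> \<le> R^2 * (x \<bullet> x) + (R^2 * (y \<bullet> y)) / R^2"
    using normB[OF y] R by (simp add: pos_divide_le_eq mult.commute)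
  finally show ?thesis unfolding y_def[symmetric] using R by simp
qed

lemma Mop_carrier[simp]: "x \<in> carrier_vec m \<Longrightarrow> Mop B R n x \<in> carrier_vec m"
  unfolding Mop_def using B by auto

lemma Mop_adj:
  assumes x: "x \<in> carrier_vec m" and y: "y \<in> carrier_vec m"
  shows "Mop B R (Suc n) x \<bullet> y = x \<bullet> Mop B R n y"
proof (cases "odd n")
  case True
  then show ?thesis unfolding Mop_def using x y B
    by (simp add: transpose_vec_mult_scalar[OF B])
next
  case False
  have "(B *\<^sub>v x) \<bullet> y = y \<bullet> (B *\<^sub>v x)" by (rule comm_scalar_prod[of _ m], insert x y B, auto)
  also have "\<dots> = (transpose_mat B *\<^sub>v y) \<bullet> x" by (rule transpose_vec_mult_scalar[OF B x y, symmetric])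
  also have "\<dots> = x \<bullet> (transpose_mat B *\<^sub>v y)" by (rule comm_scalar_prod[of _ m], insert x y B, auto)
  finally show ?thesis using False x y B unfolding Mop_def by simp
qed

lemma Mop_norm:
  assumes x: "x \<in> carrier_vec m"
  shows "Mop B R n x \<bullet> Mop B R n x \<le> x \<bullet> x"
proof -
  have "Mop B R n x \<bullet> Mop B R n x = (1/R^2) * (((if odd n then B else transpose_mat B) *\<^sub>v x) \<bullet> ((if odd n then B else transpose_mat B) *\<^sub>v x))"
    unfolding Mop_def using x B by (simp add: power2_eq_square)
  also have "\<dots> \<le> (1/R^2) * (R^2 * (x \<bullet> x))"
    using normB[OF x] normBT[OF x] R by (intro mult_left_mono) auto
  finally show ?thesis using R by simp
qed

lemma w_carrier2: "z \<in> carrier_vec m \<Longrightarrow> wseq B R z n \<in> carrier_vec m \<and> wseq B R z (Suc n) \<in> carrier_vec m"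
  by (induction n) auto

lemma w_carrier[simp]: "z \<in> carrier_vec m \<Longrightarrow> wseq B R z n \<in> carrier_vec m"
  using w_carrier2 by blast

lemma w_inv:
  assumes z: "z \<in> carrier_vec m"
  shows "wseq B R z (Suc n) \<bullet> wseq B R z (Suc n) - 2 * (Mop B R (Suc n) (wseq B R z (Suc n)) \<bullet> wseq B R z n)
     + wseq B R z n \<bullet> wseq B R z n = z \<bullet> z"
proof (induction n)
  case 0
  then show ?case using z by simp
next
  case (Suc n)
  define a where "a = wseq B R z (Suc n)"
  define b where "b = wseq B R z n"
  define M where "M = Mop B R (Suc n)"
  have a: "a \<in> carrier_vec m" and b: "b \<in> carrier_vec m" using z unfolding a_def b_def by auto
  have Ma: "M a \<in> carrier_vec m" unfolding M_def using a by simp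
  have c: "wseq B R z (Suc (Suc n)) = 2 \<cdot>\<^sub>v M a - b" unfolding a_def b_def M_def by simp
  have e1: "(2 \<cdot>\<^sub>v M a - b) \<bullet> (2 \<cdot>\<^sub>v M a - b) = 4 * (M a \<bullet> M a) - 4 * (M a \<bullet> b) + b \<bullet> b"
    using sq_expand[OF Ma b, of 2] by simp
  have e2: "Mop B R (Suc (Suc n)) (2 \<cdot>\<^sub>v M a - b) \<bullet> a = (2 \<cdot>\<^sub>v M a - b) \<bullet> M a"
    unfolding M_def by (rule Mop_adj, insert Ma b a M_def, auto)
  have e3: "(2 \<cdot>\<^sub>v M a - b) \<bullet> M a = 2 * (M a \<bullet> M a) - b \<bullet> M a"
    using lin_expand[OF Ma b Ma] by simp
  have e4: "b \<bullet> M a = M a \<bullet> b" by (rule comm_scalar_prod[OF b Ma])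
  have IH: "a \<bullet> a - 2 * (M a \<bullet> b) + b \<bullet> b = z \<bullet> z" using Suc unfolding a_def b_def M_def .
  show ?case unfolding c unfolding a_def[symmetric]
    using e1 e2 e3 e4 IH by simp
qed

lemma w_bound:
  assumes z: "z \<in> carrier_vec m"
  shows "(wseq B R z (Suc (Suc n)) - wseq B R z n) \<bullet> (wseq B R z (Suc (Suc n)) - wseq B R z n) \<le> 4 * (z \<bullet> z)"
proof -
  define a where "a = wseq B R z (Suc n)"
  define b where "b = wseq B R z n"
  define M where "M = Mop B R (Suc n)"
  have a: "a \<in> carrier_vec m" and b: "b \<in> carrier_vec m" using z unfolding a_def b_def by auto
  have Ma: "M a \<in> carrier_vec m" unfolding M_def using a by simp
  have c: "wseq B R z (Suc (Suc n)) - wseq B R z n = 2 \<cdot>\<^sub>v (M a - b)"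
  proof -
    have d1: "dim_vec (M a) = m" "dim_vec b = m" "dim_vec a = m" using Ma a b by auto
    show ?thesis unfolding a_def b_def M_def
      by (intro eq_vecI) (insert d1, auto simp: algebra_simps a_def b_def M_def)
  qed
  have "(2 \<cdot>\<^sub>v (M a - b)) \<bullet> (2 \<cdot>\<^sub>v (M a - b)) = 4 * ((M a - b) \<bullet> (M a - b))"
    using Ma b by simp
  also have "(M a - b) \<bullet> (M a - b) = (M a \<bullet> M a) - 2 * (M a \<bullet> b) + b \<bullet> b"
    using sq_expand[OF Ma b, of 1] by simp
  also have "\<dots> = z \<bullet> z - a \<bullet> a + M a \<bullet> M a"
    using w_inv[OF z, of n] unfolding a_def[symmetric] b_def[symmetric] M_def[symmetric] by simp
  also have "\<dots> \<le> z \<bullet> z" using Mop_norm[OF a] unfolding M_def by simp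
  finally show ?thesis unfolding c by simp
qed

lemma w_scalar_aux:
  fixes W4 W2 W0 P Q X :: real
  assumes e4: "W4 = (2/R)*Q - W2" and e3: "Q = (2/R)*X - P" and e2: "W2 = (2/R)*P - W0"
  shows "W4 = 4/R^2 * X - 2*W2 - W0"
proof -
  have p: "(2/R)*P = W2 + W0" using e2 by simp
  have "W4 = (2/R)*((2/R)*X - P) - W2" using e4 e3 by simp
  also have "\<dots> = (4/R^2)*X - (2/R)*P - W2" by (simp add: algebra_simps power2_eq_square)
  finally show ?thesis using p by simp
qed

lemma idx3:
  assumes "x \<in> carrier_vec m" "y \<in> carrier_vec m" "u \<in> carrier_vec m" "i < m"
  shows "(a \<cdot>\<^sub>v x - b \<cdot>\<^sub>v y - u) $ i = a * x $ i - b * y $ i - (u :: real vec) $ i"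
  using assms by (simp add: carrier_vecD)

lemma Blin:
  fixes M :: "real mat"
  assumes M: "M \<in> carrier_mat m m" and x: "x \<in> carrier_vec m" and y: "y \<in> carrier_vec m" and i: "i < m"
  shows "(M *\<^sub>v (a \<cdot>\<^sub>v x - y)) $ i = a * (M *\<^sub>v x) $ i - (M *\<^sub>v y) $ i"
proof -
  have "M *\<^sub>v (a \<cdot>\<^sub>v x - y) = a \<cdot>\<^sub>v (M *\<^sub>v x) - M *\<^sub>v y"
    using M x y by (simp add: mult_minus_distrib_mat_vec[OF M] mult_mat_vec[OF M])
  then show ?thesis using M x y i by simp
qed

lemma w_idx:
  assumes z: "z \<in> carrier_vec m" and i: "i < m"
  shows "wseq B R z (Suc (Suc n)) $ i = (2/R) * ((if odd (Suc n) then B else transpose_mat B) *\<^sub>v wseq B R z (Suc n)) $ i - wseq B R z n $ i"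
proof -
  have c: "wseq B R z n \<in> carrier_vec m" for n using z by simp
  show ?thesis using c[of n] c[of "Suc n"] i B
    by (simp add: Mop_def carrier_vecD del: index_mult_mat_vec)
qed

lemma w_double:
  assumes z: "z \<in> carrier_vec m"
  shows "wseq B R z (Suc (Suc (Suc (Suc (2*t))))) =
    (4/R^2) \<cdot>\<^sub>v (B *\<^sub>v (transpose_mat B *\<^sub>v wseq B R z (Suc (Suc (2*t)))))
      - 2 \<cdot>\<^sub>v wseq B R z (Suc (Suc (2*t))) - wseq B R z (2*t)"
proof (rule eq_vecI)
  let ?w = "wseq B R z"
  have c: "?w n \<in> carrier_vec m" for n using z by simp
  have BTc: "transpose_mat B *\<^sub>v ?w n \<in> carrier_vec m" for n using z B by simp
  show "dim_vec (?w (Suc (Suc (Suc (Suc (2*t)))))) = dim_vec ((4/R^2) \<cdot>\<^sub>v (B *\<^sub>v (transpose_mat B *\<^sub>v ?w (Suc (Suc (2*t)))))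
      - 2 \<cdot>\<^sub>v ?w (Suc (Suc (2*t))) - ?w (2*t))" using c B by (simp add: carrier_vecD)
  fix i assume "i < dim_vec ((4/R^2) \<cdot>\<^sub>v (B *\<^sub>v (transpose_mat B *\<^sub>v ?w (Suc (Suc (2*t)))))
      - 2 \<cdot>\<^sub>v ?w (Suc (Suc (2*t))) - ?w (2*t))"
  then have i: "i < m" using c[of "2*t"] B by (simp add: carrier_vecD)
  have e4: "?w (Suc (Suc (Suc (Suc (2*t))))) $ i = (2/R) * (B *\<^sub>v ?w (Suc (Suc (Suc (2*t))))) $ i - ?w (Suc (Suc (2*t))) $ i"
    using w_idx[OF z i, of "Suc (Suc (2*t))"] by simp
  have e3: "(B *\<^sub>v ?w (Suc (Suc (Suc (2*t))))) $ i = (2/R) * (B *\<^sub>v (transpose_mat B *\<^sub>v ?w (Suc (Suc (2*t))))) $ i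
      - (B *\<^sub>v ?w (Suc (2*t))) $ i"
  proof -
    have "?w (Suc (Suc (Suc (2*t)))) = (2/R) \<cdot>\<^sub>v (transpose_mat B *\<^sub>v ?w (Suc (Suc (2*t)))) - ?w (Suc (2*t))"
      by (subst wseq.simps(3)) (simp add: Mop_def smult_smult_assoc del: wseq.simps)
    then show ?thesis using Blin[OF B BTc c i] by (simp del: wseq.simps)
  qed
  have e2: "?w (Suc (Suc (2*t))) $ i = (2/R) * (B *\<^sub>v ?w (Suc (2*t))) $ i - ?w (2*t) $ i"
    using w_idx[OF z i, of "2*t"] by simp
  show "?w (Suc (Suc (Suc (Suc (2*t))))) $ i = ((4/R^2) \<cdot>\<^sub>v (B *\<^sub>v (transpose_mat B *\<^sub>v ?w (Suc (Suc (2*t)))))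
      - 2 \<cdot>\<^sub>v ?w (Suc (Suc (2*t))) - ?w (2*t)) $ i"
    apply (subst idx3)
    using w_scalar_aux[OF e4 e3 e2] c BTc i B R by (simp_all add: carrier_vecD del: index_mult_mat_vec wseq.simps)
qed

context
  fixes v :: "real vec" assumes v: "v \<in> carrier_vec m"
begin

lemma Eg_carrier2: "Eseq B R v t \<in> carrier_vec m \<and> Eseq B R v (Suc t) \<in> carrier_vec m \<and>
   gseq B R v t \<in> carrier_vec m \<and> gseq B R v (Suc t) \<in> carrier_vec m"
  by (induction t) (insert v B, auto)

lemma E_carrier[simp]: "Eseq B R v t \<in> carrier_vec m" using Eg_carrier2 by blast
lemma g_carrier[simp]: "gseq B R v t \<in> carrier_vec m" using Eg_carrier2 by blast

lemma E_decomp1: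
  "Eseq B R v t = ((2/R) * escal t) \<cdot>\<^sub>v v + B *\<^sub>v gseq B R v t \<and>
   Eseq B R v (Suc t) = ((2/R) * escal (Suc t)) \<cdot>\<^sub>v v + B *\<^sub>v gseq B R v (Suc t)"
proof (induction t)
  case 0
  show ?case using v B by (auto intro!: eq_vecI)
next
  case (Suc t)
  let ?E = "Eseq B R v" and ?g = "gseq B R v"
  have IH1: "?E t $ i = (2/R) * escal t * v $ i + (B *\<^sub>v ?g t) $ i" if "i < m" for i
    using Suc that v B by (subst conjunct1[OF Suc]) simp
  have IH2: "?E (Suc t) $ i = (2/R) * escal (Suc t) * v $ i + (B *\<^sub>v ?g (Suc t)) $ i" if "i < m" for i
    using Suc that v B by (subst conjunct2[OF Suc]) simp
  have BTE: "transpose_mat B *\<^sub>v ?E (Suc t) \<in> carrier_vec m" using B by simp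
  have Bg: "(B *\<^sub>v ?g (Suc (Suc t))) $ i = (4/R^2) * (B *\<^sub>v (transpose_mat B *\<^sub>v ?E (Suc t))) $ i
     - 2 * (B *\<^sub>v ?g (Suc t)) $ i - (B *\<^sub>v ?g t) $ i" if i: "i < m" for i
  proof -
    have "B *\<^sub>v ?g (Suc (Suc t)) = B *\<^sub>v ((4/R^2) \<cdot>\<^sub>v (transpose_mat B *\<^sub>v ?E (Suc t)) - 2 \<cdot>\<^sub>v ?g (Suc t)) - B *\<^sub>v ?g t"
      using B BTE by (simp add: mult_minus_distrib_mat_vec[OF B])
    then show ?thesis using Blin[OF B BTE _ i, of "?g (Suc t)"] B BTE i
      by (simp add: mult_minus_distrib_mat_vec[OF B] mult_mat_vec[OF B])
  qed
  have "?E (Suc (Suc t)) = ((2/R) * escal (Suc (Suc t))) \<cdot>\<^sub>v v + B *\<^sub>v ?g (Suc (Suc t))"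
  proof (rule eq_vecI)
    fix i assume "i < dim_vec (((2/R) * escal (Suc (Suc t))) \<cdot>\<^sub>v v + B *\<^sub>v ?g (Suc (Suc t)))"
    then have i: "i < m" using v B by (simp add: carrier_matD)
    have Eidx: "?E (Suc (Suc t)) $ i = (4/R^2) * (B *\<^sub>v (transpose_mat B *\<^sub>v ?E (Suc t))) $ i - 2 * ?E (Suc t) $ i - ?E t $ i"
      using i v B BTE by (subst Eseq.simps(3), subst idx3) (simp_all del: index_mult_mat_vec Eseq.simps)
    show "?E (Suc (Suc t)) $ i = (((2/R) * escal (Suc (Suc t))) \<cdot>\<^sub>v v + B *\<^sub>v ?g (Suc (Suc t))) $ i"
      using Eidx IH1[OF i] IH2[OF i] Bg[OF i] i v B BTE by (simp add: algebra_simps carrier_vecD carrier_matD del: index_mult_mat_vec)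
  qed (insert v B, simp)
  then show ?case using Suc by simp
qed

lemma E_w:
  assumes z: "z \<in> carrier_vec m" and vz: "v = B *\<^sub>v z"
  shows "Eseq B R v t = wseq B R z (2*t) \<and> Eseq B R v (Suc t) = wseq B R z (2 * Suc t)"
proof (induction t)
  case 0
  have "Eseq B R v (Suc 0) = wseq B R z 2"
    using z B unfolding vz by (intro eq_vecI) (auto simp: Mop_def numeral_2_eq_2)
  then show ?case using z v by (simp add: carrier_vecD)
next
  case (Suc t)
  have "Eseq B R v (Suc (Suc t)) = wseq B R z (Suc (Suc (Suc (Suc (2*t)))))"
    unfolding w_double[OF z] Eseq.simps using Suc by simp
  then show ?case using Suc by simp
qed

end

end



fun ks :: "real mat \<Rightarrow> real vec \<Rightarrow> nat \<Rightarrow> real vec" where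
  "ks B v 0 = 0\<^sub>v (dim_vec v)"
| "ks B v (Suc 0) = v"
| "ks B v (Suc (Suc j)) = (if even j then transpose_mat B else B) *\<^sub>v ks B v (Suc j)"

definition Sp :: "real mat \<Rightarrow> real vec \<Rightarrow> nat set \<Rightarrow> real vec \<Rightarrow> bool" where
  "Sp B v S x \<longleftrightarrow> (\<exists>c. x = vec (dim_vec v) (\<lambda>r. \<Sum>i\<in>S. c i * ks B v i $ r))"

locale kspan =
  fixes m :: nat and B :: "real mat" and v :: "real vec"
  assumes B: "B \<in> carrier_mat m m" and v: "v \<in> carrier_vec m"
begin

lemma ks_carrier2: "ks B v i \<in> carrier_vec m \<and> ks B v (Suc i) \<in> carrier_vec m"
  by (induction i) (insert B v, auto)

lemma ks_carrier[simp]: "ks B v i \<in> carrier_vec m" using ks_carrier2 by blast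

lemma dimv: "dim_vec v = m" using v by (simp add: carrier_vecD)

lemma Sp_zero: "Sp B v S (0\<^sub>v m)"
  unfolding Sp_def dimv by (rule exI[of _ "\<lambda>_. 0"]) (auto intro!: eq_vecI)

lemma Sp_ks: "finite S \<Longrightarrow> i \<in> S \<Longrightarrow> Sp B v S (ks B v i)"
  unfolding Sp_def dimv
  apply (rule exI[of _ "\<lambda>j. if j = i then 1 else 0"])
  apply (rule eq_vecI)
  using ks_carrier[of i] by (auto simp: carrier_vecD sum.remove)

lemma Sp_mono: assumes "Sp B v S x" "S \<subseteq> T" "finite T" shows "Sp B v T x"
proof -
  obtain c where x: "x = vec m (\<lambda>r. \<Sum>i\<in>S. c i * ks B v i $ r)" using assms(1) unfolding Sp_def dimv by blast
  have "x = vec m (\<lambda>r. \<Sum>i\<in>T. (if i \<in> S then c i else 0) * ks B v i $ r)"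
    unfolding x
  proof (rule eq_vecI)
    fix r
    have "(\<Sum>i\<in>T. (if i \<in> S then c i else 0) * ks B v i $ r) = (\<Sum>i\<in>S. c i * ks B v i $ r)"
      by (rule sum.mono_neutral_cong_right) (insert assms(2,3), auto)
    then show "vec m (\<lambda>r. \<Sum>i\<in>S. c i * ks B v i $ r) $ r = vec m (\<lambda>r. \<Sum>i\<in>T. (if i \<in> S then c i else 0) * ks B v i $ r) $ r" if "r < dim_vec (vec m (\<lambda>r. \<Sum>i\<in>T. (if i \<in> S then c i else 0) * ks B v i $ r))"
      using that by simp
  qed simp
  then show ?thesis unfolding Sp_def dimv by (intro exI[of _ "\<lambda>i. if i \<in> S then c i else 0"])
qed

lemma Sp_comb: assumes "Sp B v S x" "Sp B v S y" shows "Sp B v S (a \<cdot>\<^sub>v x - b \<cdot>\<^sub>v y)"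
proof -
  obtain c where x: "x = vec m (\<lambda>r. \<Sum>i\<in>S. c i * ks B v i $ r)" using assms(1) unfolding Sp_def dimv by blast
  obtain d where y: "y = vec m (\<lambda>r. \<Sum>i\<in>S. d i * ks B v i $ r)" using assms(2) unfolding Sp_def dimv by blast
  have "a \<cdot>\<^sub>v x - b \<cdot>\<^sub>v y = vec m (\<lambda>r. \<Sum>i\<in>S. (a * c i - b * d i) * ks B v i $ r)"
    unfolding x y
    by (rule eq_vecI) (auto simp: sum_distrib_left sum_subtractf[symmetric] algebra_simps intro!: sum.cong)
  then show ?thesis unfolding Sp_def dimv by (intro exI[of _ "\<lambda>i. a * c i - b * d i"])
qed

lemma Sp_smult: assumes "Sp B v S x" shows "Sp B v S (a \<cdot>\<^sub>v x)"
proof -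
  have "a \<cdot>\<^sub>v x = a \<cdot>\<^sub>v x - 0 \<cdot>\<^sub>v x" using assms unfolding Sp_def dimv by (auto intro!: eq_vecI)
  then show ?thesis using Sp_comb[OF assms assms, of a 0] by simp
qed

lemma Sp_mat:
  fixes M :: "real mat"
  assumes S: "finite S" and M: "M \<in> carrier_mat m m" and st: "\<And>i. i \<in> S \<Longrightarrow> M *\<^sub>v ks B v i = ks B v (Suc i)"
    and x: "Sp B v S x"
  shows "Sp B v (Suc ` S) (M *\<^sub>v x)"
proof -
  obtain c where x: "x = vec m (\<lambda>r. \<Sum>i\<in>S. c i * ks B v i $ r)" using x unfolding Sp_def dimv by blast
  have "M *\<^sub>v x = vec m (\<lambda>r. \<Sum>i\<in>Suc ` S. c (i - 1) * ks B v i $ r)"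
  proof (rule eq_vecI)
    show "dim_vec (M *\<^sub>v x) = dim_vec (vec m (\<lambda>r. \<Sum>i\<in>Suc ` S. c (i - 1) * ks B v i $ r))" using M by simp
    fix r assume "r < dim_vec (vec m (\<lambda>r. \<Sum>i\<in>Suc ` S. c (i - 1) * ks B v i $ r))"
    then have r: "r < m" by simp
    have mv: "(M *\<^sub>v y) $ r = (\<Sum>j\<in>{0..<m}. M $$ (r, j) * y $ j)" if "y \<in> carrier_vec m" for y
      using that M r by (simp add: scalar_prod_def carrier_vecD carrier_matD)
    have "(M *\<^sub>v x) $ r = (\<Sum>j\<in>{0..<m}. M $$ (r, j) * (\<Sum>i\<in>S. c i * ks B v i $ j))"
      by (subst mv) (auto simp: x)
    also have "\<dots> = (\<Sum>j\<in>{0..<m}. \<Sum>i\<in>S. c i * (M $$ (r, j) * ks B v i $ j))"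
      by (simp add: sum_distrib_left algebra_simps)
    also have "\<dots> = (\<Sum>i\<in>S. \<Sum>j\<in>{0..<m}. c i * (M $$ (r, j) * ks B v i $ j))"
      by (rule sum.swap)
    also have "\<dots> = (\<Sum>i\<in>S. c i * (M *\<^sub>v ks B v i) $ r)"
      by (simp add: mv sum_distrib_left)
    also have "\<dots> = (\<Sum>i\<in>S. c i * ks B v (Suc i) $ r)"
      using st by simp
    also have "\<dots> = (\<Sum>i\<in>Suc ` S. c (i - 1) * ks B v i $ r)"
      by (simp add: sum.reindex)
    finally show "(M *\<^sub>v x) $ r = vec m (\<lambda>r. \<Sum>i\<in>Suc ` S. c (i - 1) * ks B v i $ r) $ r" using r by simp
  qed
  then show ?thesis unfolding Sp_def dimv by (intro exI[of _ "\<lambda>i. c (i - 1)"])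
qed

lemma Sp_dim: "Sp B v S x \<Longrightarrow> x \<in> carrier_vec m"
  unfolding Sp_def dimv by auto

lemma Sp_minus: assumes "Sp B v S x" "Sp B v S y" shows "Sp B v S (x - y)"
proof -
  have "x - y = 1 \<cdot>\<^sub>v x - 1 \<cdot>\<^sub>v y" using Sp_dim[OF assms(1)] Sp_dim[OF assms(2)]
    by (auto intro!: eq_vecI simp: carrier_vecD)
  then show ?thesis using Sp_comb[OF assms, of 1 1] by simp
qed

lemma ks_odd: "odd i \<Longrightarrow> transpose_mat B *\<^sub>v ks B v i = ks B v (Suc i)"
  by (cases i) auto

lemma ks_even: "even i \<Longrightarrow> 0 < i \<Longrightarrow> B *\<^sub>v ks B v i = ks B v (Suc i)"
  by (cases i) auto

definition SO :: "nat \<Rightarrow> nat set" where "SO t = {i. odd i \<and> i < 2*t}"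
definition SE :: "nat \<Rightarrow> nat set" where "SE t = {i. even i \<and> 0 < i \<and> i + 1 < 2*t}"

lemma SO_fin[simp]: "finite (SO t)" unfolding SO_def by (rule finite_subset[of _ "{..<2*t}"]) auto
lemma SE_fin[simp]: "finite (SE t)" unfolding SE_def by (rule finite_subset[of _ "{..<2*t}"]) auto

lemma Eg_span:
  "Sp B v (SO t) (Eseq B R v t) \<and> Sp B v (SE t) (gseq B R v t) \<and>
   Sp B v (SO (Suc t)) (Eseq B R v (Suc t)) \<and> Sp B v (SE (Suc t)) (gseq B R v (Suc t))"
proof (induction t)
  case 0
  have "Sp B v (SO (Suc 0)) ((2/R) \<cdot>\<^sub>v ks B v 1)"
    by (rule Sp_smult, rule Sp_ks) (auto simp: SO_def)
  then show ?case using Sp_zero dimv by simp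
next
  case (Suc t)
  let ?E = "Eseq B R v" and ?g = "gseq B R v"
  have h1: "Sp B v (Suc ` SO (Suc t)) (transpose_mat B *\<^sub>v ?E (Suc t))"
    by (rule Sp_mat) (insert Suc B, auto simp: SO_def ks_odd)
  have h1': "Sp B v (SE (Suc (Suc t))) (transpose_mat B *\<^sub>v ?E (Suc t))"
    by (rule Sp_mono[OF h1]) (auto simp: SO_def SE_def)
  have h2: "Sp B v (Suc ` SE (Suc (Suc t))) (B *\<^sub>v (transpose_mat B *\<^sub>v ?E (Suc t)))"
    by (rule Sp_mat[OF _ B _ h1']) (auto simp: SE_def ks_even)
  have h2': "Sp B v (SO (Suc (Suc t))) (B *\<^sub>v (transpose_mat B *\<^sub>v ?E (Suc t)))"
    by (rule Sp_mono[OF h2]) (auto simp: SO_def SE_def)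
  have E1: "Sp B v (SO (Suc (Suc t))) (?E (Suc t))"
    by (rule Sp_mono) (insert Suc, auto simp: SO_def)
  have E0: "Sp B v (SO (Suc (Suc t))) (?E t)"
    by (rule Sp_mono) (insert Suc, auto simp: SO_def)
  have g1: "Sp B v (SE (Suc (Suc t))) (?g (Suc t))"
    by (rule Sp_mono) (insert Suc, auto simp: SE_def)
  have g0: "Sp B v (SE (Suc (Suc t))) (?g t)"
    by (rule Sp_mono) (insert Suc, auto simp: SE_def)
  have "Sp B v (SO (Suc (Suc t))) (?E (Suc (Suc t)))"
    unfolding Eseq.simps by (intro Sp_minus Sp_comb h2' E1 E0)
  moreover have "Sp B v (SE (Suc (Suc t))) (?g (Suc (Suc t)))"
    unfolding gseq.simps by (intro Sp_minus Sp_comb h1' g1 g0)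
  ultimately show ?case using Suc by simp
qed

end



lemma vnorm_sq: "(vnorm x)^2 = x \<bullet> x"
  unfolding vnorm_def by (rule real_sqrt_pow2[OF self_sp_nonneg])

lemma vnorm_nonneg: "vnorm x \<ge> 0" unfolding vnorm_def using self_sp_nonneg[of x] by simp

lemma vnorm_smult: "vnorm (a \<cdot>\<^sub>v x) = \<bar>a\<bar> * vnorm x"
proof -
  have "(a \<cdot>\<^sub>v x) \<bullet> (a \<cdot>\<^sub>v x) = a^2 * (x \<bullet> x)"
    using carrier_vecI[of x "dim_vec x"] by (simp add: power2_eq_square)
  then show ?thesis unfolding vnorm_def by (simp add: real_sqrt_mult)
qed

lemma comp_le_norm:
  assumes "j < dim_vec x" shows "(x $ j)^2 \<le> x \<bullet> (x :: real vec)"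
proof -
  have "(x $ j)^2 = x $ j * x $ j" by (simp add: power2_eq_square)
  also have "\<dots> \<le> (\<Sum>i\<in>{0..<dim_vec x}. x $ i * x $ i)"
    by (rule member_le_sum[where f="\<lambda>i. x $ i * x $ i"]) (insert assms, auto)
  finally show ?thesis unfolding scalar_prod_def .
qed

lemma spec_bound:
  fixes B :: "real mat"
  assumes B: "B \<in> carrier_mat m m" and x: "x \<in> carrier_vec m"
  shows "vnorm (B *\<^sub>v x) \<le> spec_norm B * vnorm x"
proof -
  define S where "S = {vnorm (B *\<^sub>v x) | x. x \<in> carrier_vec (dim_col B) \<and> vnorm x \<le> 1}"
  define K where "K = sqrt (\<Sum>r\<in>{0..<m}. (\<Sum>j\<in>{0..<m}. \<bar>B $$ (r,j)\<bar>)^2)"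
  have mv: "(B *\<^sub>v y) $ r = (\<Sum>j\<in>{0..<m}. B $$ (r, j) * y $ j)" if "y \<in> carrier_vec m" "r < m" for y r
    using that B by (simp add: scalar_prod_def carrier_vecD carrier_matD)
  have bdd: "bdd_above S"
  proof (rule bdd_aboveI[of _ K])
    fix s assume "s \<in> S"
    then obtain y where y: "y \<in> carrier_vec m" "vnorm y \<le> 1" and s: "s = vnorm (B *\<^sub>v y)"
      unfolding S_def using B by auto
    have yj: "\<bar>y $ j\<bar> \<le> 1" if "j < m" for j
    proof -
      have "(y $ j)^2 \<le> 1" using comp_le_norm[of j y] that y vnorm_sq[of y]
        by (simp add: carrier_vecD) (smt (verit) vnorm_nonneg power_le_one)
      then show ?thesis by (simp add: abs_square_le_1)
    qed
    have r: "((B *\<^sub>v y) $ r)^2 \<le> (\<Sum>j\<in>{0..<m}. \<bar>B $$ (r,j)\<bar>)^2" if "r < m" for r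
    proof -
      have "\<bar>(B *\<^sub>v y) $ r\<bar> \<le> (\<Sum>j\<in>{0..<m}. \<bar>B $$ (r, j) * y $ j\<bar>)"
        unfolding mv[OF y(1) that] by (rule sum_abs)
      also have "\<dots> \<le> (\<Sum>j\<in>{0..<m}. \<bar>B $$ (r,j)\<bar>)"
        by (rule sum_mono) (use yj in \<open>auto simp: abs_mult intro: mult_left_le\<close>)
      finally have "\<bar>(B *\<^sub>v y) $ r\<bar> \<le> (\<Sum>j\<in>{0..<m}. \<bar>B $$ (r,j)\<bar>)" .
      from power_mono[OF this abs_ge_zero, of 2] show ?thesis by simp
    qed
    have "(B *\<^sub>v y) \<bullet> (B *\<^sub>v y) = (\<Sum>r\<in>{0..<m}. ((B *\<^sub>v y) $ r)^2)"
      using B by (simp add: scalar_prod_def power2_eq_square carrier_matD)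
    also have "\<dots> \<le> (\<Sum>r\<in>{0..<m}. (\<Sum>j\<in>{0..<m}. \<bar>B $$ (r,j)\<bar>)^2)"
      by (rule sum_mono) (simp add: r)
    finally show "s \<le> K" unfolding s K_def vnorm_def by (rule real_sqrt_le_mono)
  qed
  show ?thesis
  proof (cases "vnorm x = 0")
    case True
    then have "x \<bullet> x = 0" using vnorm_sq[of x] by simp
    then have xj: "x $ j = 0" if "j < m" for j
      using comp_le_norm[of j x] that x self_sp_nonneg[of x] by (simp add: carrier_vecD)
    have "(B *\<^sub>v x) $ r = 0" if "r < m" for r using mv[OF x that] xj by simp
    then have "(B *\<^sub>v x) \<bullet> (B *\<^sub>v x) = 0" using B by (simp add: scalar_prod_def carrier_matD)
    then show ?thesis using True unfolding vnorm_def by simp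
  next
    case False
    define n where "n = vnorm x"
    have n: "n > 0" using False vnorm_nonneg[of x] unfolding n_def by simp
    define y where "y = (1/n) \<cdot>\<^sub>v x"
    have y: "y \<in> carrier_vec m" unfolding y_def using x by simp
    have vy: "vnorm y = 1" unfolding y_def vnorm_smult using n n_def by simp
    have By: "B *\<^sub>v y = (1/n) \<cdot>\<^sub>v (B *\<^sub>v x)" unfolding y_def by (rule mult_mat_vec[OF B x])
    have "vnorm (B *\<^sub>v y) \<in> S" unfolding S_def using y vy B by (auto simp: carrier_matD)
    then have "vnorm (B *\<^sub>v y) \<le> spec_norm B" unfolding spec_norm_def S_def[symmetric]
      by (rule cSup_upper[OF _ bdd])
    then have "vnorm (B *\<^sub>v x) / n \<le> spec_norm B" unfolding By vnorm_smult using n by simp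
    then show ?thesis using n unfolding n_def[symmetric] by (simp add: pos_divide_le_eq mult.commute)
  qed
qed




definition Alg :: "real \<Rightarrow> real mat \<Rightarrow> real vec \<Rightarrow> nat \<Rightarrow> real vec" where
  "Alg R B v k = (-1 / ((2/R) * (escal (Suc (k div 2)) - escal (k div 2)))) \<cdot>\<^sub>v
      (gseq B R v (Suc (k div 2)) - gseq B R v (k div 2))"

lemma Alg_lin: "in_A_lin (Alg R)"
  unfolding in_A_lin_def
proof (intro allI impI)
  fix m B v assume B: "(B :: real mat) \<in> carrier_mat m m" and v: "(v :: real vec) \<in> carrier_vec m"
  interpret kspan m B v using B v by unfold_locales
  show "\<exists>vs. vs 0 = 0\<^sub>v m \<and> vs 1 = v \<and> (\<forall>j\<ge>2. \<exists>i<j. vs j = B *\<^sub>v vs i \<or> vs j = B\<^sup>T *\<^sub>v vs i) \<and>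
        (\<forall>k. \<exists>c. Alg R B v k = vec m (\<lambda>r. \<Sum>i\<le>k. c i * vs i $ r))"
  proof (intro exI[of _ "ks B v"] conjI allI impI)
    show "ks B v 0 = 0\<^sub>v m" using dimv by simp
    show "ks B v 1 = v" by simp
  next
    fix j :: nat assume "2 \<le> j"
    then obtain j' where j: "j = Suc (Suc j')" by (metis add_2_eq_Suc le_Suc_ex)
    show "\<exists>i<j. ks B v j = B *\<^sub>v ks B v i \<or> ks B v j = B\<^sup>T *\<^sub>v ks B v i"
      by (rule exI[of _ "Suc j'"]) (auto simp: j)
  next
    fix k :: nat
    define t where "t = k div 2"
    have g1: "Sp B v (SE (Suc t)) (gseq B R v (Suc t))" using Eg_span[of t R] by simp
    have g0: "Sp B v (SE (Suc t)) (gseq B R v t)"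
      by (rule Sp_mono) (insert Eg_span[of t R], auto simp: SE_def)
    have "Sp B v (SE (Suc t)) (Alg R B v k)"
      unfolding Alg_def t_def[symmetric] by (intro Sp_smult Sp_minus g1 g0)
    then have "Sp B v {..k} (Alg R B v k)"
      by (rule Sp_mono) (auto simp: SE_def t_def)
    then show "\<exists>c. Alg R B v k = vec m (\<lambda>r. \<Sum>i\<le>k. c i * ks B v i $ r)"
      unfolding Sp_def dimv .
  qed
qed

theorem lemma4:
  fixes R D :: real and k :: nat
  assumes "R > 0" and "D > 0"
  shows "\<exists>A. in_A_lin A \<and>
    (\<forall>m \<ge> 1. \<forall>B zstar.
        B \<in> carrier_mat m m \<longrightarrow> spec_norm B \<le> R \<longrightarrow>
        zstar \<in> carrier_vec m \<longrightarrow> vnorm zstar \<le> D \<longrightarrow>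
        (vnorm (B *\<^sub>v A B (B *\<^sub>v zstar) k - B *\<^sub>v zstar))\<^sup>2
          \<le> R\<^sup>2 * D\<^sup>2 / (2 * real (k div 2) + 1)\<^sup>2)"
proof (intro exI[of _ "Alg R"] conjI allI impI)
  show "in_A_lin (Alg R)" by (rule Alg_lin)
  fix m :: nat and B zstar
  assume m: "1 \<le> m" and B: "B \<in> carrier_mat m m" and sn: "spec_norm B \<le> R"
    and z: "zstar \<in> carrier_vec m" and zD: "vnorm zstar \<le> D"
  have normB: "(B *\<^sub>v x) \<bullet> (B *\<^sub>v x) \<le> R^2 * (x \<bullet> x)" if x: "x \<in> carrier_vec m" for x
  proof -
    have "vnorm (B *\<^sub>v x) \<le> R * vnorm x"
      using spec_bound[OF B x] sn vnorm_nonneg[of x] by (meson mult_right_mono order_trans)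
    from power_mono[OF this vnorm_nonneg, of 2] show ?thesis
      by (simp add: vnorm_sq power_mult_distrib)
  qed
  interpret kset m B R using B assms(1) normB by unfold_locales auto
  define v where "v = B *\<^sub>v zstar"
  have v: "v \<in> carrier_vec m" unfolding v_def using B z by simp
  define t where "t = k div 2"
  define d where "d = (2/R) * (escal (Suc t) - escal t)"
  have d: "d = (2/R) * (-1)^t * (2 * real t + 1)" unfolding d_def escal_diff by simp
  have d2: "d^2 = 4 * (2 * real t + 1)^2 / R^2" unfolding d
    by (simp add: power2_eq_square field_simps)
  have dnz: "d \<noteq> 0" using d assms(1) by simp
  let ?E = "Eseq B R v" and ?g = "gseq B R v"
  have Ec: "?E n \<in> carrier_vec m" for n using E_carrier[OF v] .
  have gc: "?g n \<in> carrier_vec m" for n using g_carrier[OF v] .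
  have ED: "?E n = ((2/R) * escal n) \<cdot>\<^sub>v v + B *\<^sub>v ?g n" for n using E_decomp1[OF v, of n] by simp
  have res: "B *\<^sub>v Alg R B v k - v = (-1/d) \<cdot>\<^sub>v (?E (Suc t) - ?E t)"
  proof (rule eq_vecI)
    fix i assume "i < dim_vec ((-1/d) \<cdot>\<^sub>v (?E (Suc t) - ?E t))"
    then have i: "i < m" using Ec[of t] by (simp add: carrier_vecD)
    have A: "Alg R B v k = (-1/d) \<cdot>\<^sub>v (?g (Suc t) - ?g t)" unfolding Alg_def d_def t_def by simp
    have f1: "(B *\<^sub>v Alg R B v k) $ i = (-1/d) * ((B *\<^sub>v ?g (Suc t)) $ i - (B *\<^sub>v ?g t) $ i)"
      unfolding A using B gc i
      by (simp add: mult_mat_vec[OF B] mult_minus_distrib_mat_vec[OF B] carrier_vecD carrier_matD del: index_mult_mat_vec)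
    have f2: "?E (Suc t) $ i = (2/R) * escal (Suc t) * v $ i + (B *\<^sub>v ?g (Suc t)) $ i"
      using ED[of "Suc t"] i v B gc by (simp add: carrier_vecD carrier_matD del: index_mult_mat_vec)
    have f3: "?E t $ i = (2/R) * escal t * v $ i + (B *\<^sub>v ?g t) $ i"
      using ED[of t] i v B gc by (simp add: carrier_vecD carrier_matD del: index_mult_mat_vec)
    have f4: "((-1/d) \<cdot>\<^sub>v (?E (Suc t) - ?E t)) $ i = (-1/d) * (?E (Suc t) $ i - ?E t $ i)"
      using i Ec[of t] Ec[of "Suc t"] by (simp add: carrier_vecD del: index_mult_mat_vec)
    have f5: "(B *\<^sub>v Alg R B v k - v) $ i = (B *\<^sub>v Alg R B v k) $ i - v $ i"
      using i v B by (simp add: carrier_vecD carrier_matD del: index_mult_mat_vec)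
    have dd: "(2/R) * escal (Suc t) - (2/R) * escal t = d" unfolding d_def by (simp add: algebra_simps)
    have key: "(-1/d) * (a - b) - vi = (-1/d) * ((d1 * vi + a) - (d0 * vi + b))" if "d1 - d0 = d" for a b vi d1 d0 :: real
    proof -
      have "(d1 * vi + a) - (d0 * vi + b) = d * vi + (a - b)" using that by (simp add: algebra_simps)
      then show ?thesis using dnz by (simp add: field_simps)
    qed
    show "(B *\<^sub>v Alg R B v k - v) $ i = ((-1/d) \<cdot>\<^sub>v (?E (Suc t) - ?E t)) $ i"
      unfolding f5 f4 f1 f2 f3 by (rule key[OF dd])
  next
    show "dim_vec (B *\<^sub>v Alg R B v k - v) = dim_vec ((-1/d) \<cdot>\<^sub>v (?E (Suc t) - ?E t))"
      using v Ec[of t] Ec[of "Suc t"] B by (metis carrier_matD(1) carrier_vecD dim_mult_mat_vec index_minus_vec(2) index_smult_vec(2))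
  qed
  have Ew: "?E (Suc t) - ?E t = wseq B R zstar (Suc (Suc (2*t))) - wseq B R zstar (2*t)"
    using E_w[OF v z v_def, of t] by simp
  have "(vnorm (B *\<^sub>v Alg R B v k - v))^2 = (1/d^2) * ((?E (Suc t) - ?E t) \<bullet> (?E (Suc t) - ?E t))"
    unfolding res vnorm_smult power_mult_distrib vnorm_sq by (simp add: power2_eq_square)
  also have "\<dots> \<le> (1/d^2) * (4 * (zstar \<bullet> zstar))"
    unfolding Ew by (rule mult_left_mono[OF w_bound[OF z]]) simp
  also have "\<dots> \<le> (1/d^2) * (4 * D^2)"
    using power_mono[OF zD vnorm_nonneg, of 2] unfolding vnorm_sq by (intro mult_left_mono) auto
  also have "\<dots> = R^2 * D^2 / (2 * real t + 1)^2"
    unfolding d2 using assms(1) by (simp add: field_simps)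
  finally show "(vnorm (B *\<^sub>v Alg R B (B *\<^sub>v zstar) k - B *\<^sub>v zstar))\<^sup>2
          \<le> R\<^sup>2 * D\<^sup>2 / (2 * real (k div 2) + 1)\<^sup>2" unfolding v_def t_def .
qed


end
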